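(* Let $(G,O)$ be an equipped group with $O$ finite. Let $g_1,\dots,g_n\in O$, $a_1,b_1,\dots,a_k,b_k\in G$, $g\in O$, let $h\in\langle g_1,\dots,g_n,a_1,b_1,\dots,a_k,b_k\rangle$, and let $s_{g^{-1}}\in S(G,O)$ satisfy $\alpha(s_{g^{-1}})=g^{-1}$. Then there exists $z\in S(G,O)$ such that, in $\mathbb S(G,O)$, $$x_{g_1}\cdots x_{g_n}\,x_g\,s_{g^{-1}}\,y_{a_1,b_1}\cdots y_{a_k,b_k}=x_{g_1}\cdots x_{g_n}\,x_{g^h}\,z\,y_{a_1,b_1}\cdots y_{a_k,b_k}.$$
   Context: Conventions: $x^y=y^{-1}xy$, $[x,y]=xyx^{-1}y^{-1}$. An equipped group $(G,O)$: $O\subset G$ invariant under conjugation, ${\bf 1}\notin O$. The strong covering semigroup $\mathbb S(G,O)$ is the semigroup generated by $x_g$ ($g\in O$) and $y_{a,b}$ ($a,b\in G$) subject to the relations, for all $g_1,g_2,g\in O$, $a,b\in G$: $x_{g_1}x_{g_2}=x_{g_2}x_{g_1^{g_2}}$; $x_gy_{a,b}=y_{a,b}x_{g^{[a,b]}}$; $x_gy_{a,b}=x_{g^{c_1}}y_{ga,b}$ with $c_1=ab^{-1}a^{-1}g^{-1}$; $y_{a,b}x_g=y_{a,g^{-1}b}x_{g^{c_2}}$ with $c_2=ba^{-1}b^{-1}g$; $x_gy_{a,b}=x_{g^{[a,b]}}y_{a^{g^{[a,b]}},b^{g^{[a,b]}}}$. (In the paper it is defined via the algebraic braid groups and shown to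 have this presentation.) $S(G,O)$ denotes its subsemigroup generated by the $x_g$, $g\in O$ (the factorization semigroup, with relations $x_{g_1}x_{g_2}=x_{g_2}x_{g_1^{g_2}}$), and $\alpha:S(G,O)\to G$ is the homomorphism $x_g\mapsto g$. *)

theory Defs
  imports "HOL-Algebra.Algebra"
begin

definition gconj :: "('a, 'b) monoid_scheme \<Rightarrow> 'a \<Rightarrow> 'a \<Rightarrow> 'a" where
  "gconj G x y = inv\<^bsub>G\<^esub> y \<otimes>\<^bsub>G\<^esub> x \<otimes>\<^bsub>G\<^esub> y"

definition gcomm :: "('a, 'b) monoid_scheme \<Rightarrow> 'a \<Rightarrow> 'a \<Rightarrow> 'a" where
  "gcomm G x y = x \<otimes>\<^bsub>G\<^esub> y \<otimes>\<^bsub>G\<^esub> inv\<^bsub>G\<^esub> x \<otimes>\<^bsub>G\<^esub> inv\<^bsub>G\<^esub> y"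

definition equipped :: "('a, 'b) monoid_scheme \<Rightarrow> 'a set \<Rightarrow> bool" where
  "equipped G Oc \<longleftrightarrow> group G \<and> Oc \<subseteq> carrier G \<and>
     (\<forall>g\<in>Oc. \<forall>h\<in>carrier G. gconj G g h \<in> Oc) \<and> \<one>\<^bsub>G\<^esub> \<notin> Oc"

text \<open>Generators of the strong covering semigroup: Xg g = x_g, Yab a b = y_{a,b}.
  Elements of the semigroup are represented by nonempty words.\<close>
datatype 'a gen = Xg 'a | Yab 'a 'a

definition cc1 :: "('a, 'b) monoid_scheme \<Rightarrow> 'a \<Rightarrow> 'a \<Rightarrow> 'a \<Rightarrow> 'a" where
  "cc1 G g a b = a \<otimes>\<^bsub>G\<^esub> inv\<^bsub>G\<^esub> b \<otimes>\<^bsub>G\<^esub> inv\<^bsub>G\<^esub> a \<otimes>\<^bsub>G\<^esub> inv\<^bsub>G\<^esub> g"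

definition cc2 :: "('a, 'b) monoid_scheme \<Rightarrow> 'a \<Rightarrow> 'a \<Rightarrow> 'a \<Rightarrow> 'a" where
  "cc2 G g a b = b \<otimes>\<^bsub>G\<^esub> inv\<^bsub>G\<^esub> a \<otimes>\<^bsub>G\<^esub> inv\<^bsub>G\<^esub> b \<otimes>\<^bsub>G\<^esub> g"

inductive strong_rel :: "('a, 'b) monoid_scheme \<Rightarrow> 'a set \<Rightarrow> 'a gen list \<Rightarrow> 'a gen list \<Rightarrow> bool"
  for G Oc where
  r1: "g1 \<in> Oc \<Longrightarrow> g2 \<in> Oc \<Longrightarrow>
       strong_rel G Oc [Xg g1, Xg g2] [Xg g2, Xg (gconj G g1 g2)]"
| r2: "g \<in> Oc \<Longrightarrow> a \<in> carrier G \<Longrightarrow> b \<in> carrier G \<Longrightarrow>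
       strong_rel G Oc [Xg g, Yab a b] [Yab a b, Xg (gconj G g (gcomm G a b))]"
| r3: "g \<in> Oc \<Longrightarrow> a \<in> carrier G \<Longrightarrow> b \<in> carrier G \<Longrightarrow>
       strong_rel G Oc [Xg g, Yab a b]
         [Xg (gconj G g (cc1 G g a b)), Yab (g \<otimes>\<^bsub>G\<^esub> a) b]"
| r4: "g \<in> Oc \<Longrightarrow> a \<in> carrier G \<Longrightarrow> b \<in> carrier G \<Longrightarrow>
       strong_rel G Oc [Yab a b, Xg g]
         [Yab a (inv\<^bsub>G\<^esub> g \<otimes>\<^bsub>G\<^esub> b), Xg (gconj G g (cc2 G g a b))]"
| r5: "g \<in> Oc \<Longrightarrow> a \<in> carrier G \<Longrightarrow> b \<in> carrier G \<Longrightarrow>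
       strong_rel G Oc [Xg g, Yab a b]
         [Xg (gconj G g (gcomm G a b)),
          Yab (gconj G a (gconj G g (gcomm G a b))) (gconj G b (gconj G g (gcomm G a b)))]"

text \<open>Equality in the strong covering semigroup: the congruence on words
  generated by the defining relations.\<close>
inductive strong_eq :: "('a, 'b) monoid_scheme \<Rightarrow> 'a set \<Rightarrow> 'a gen list \<Rightarrow> 'a gen list \<Rightarrow> bool"
  for G Oc where
  base: "strong_rel G Oc u v \<Longrightarrow> strong_eq G Oc u v"
| refl: "strong_eq G Oc u u"
| sym: "strong_eq G Oc u v \<Longrightarrow> strong_eq G Oc v u"
| trans: "strong_eq G Oc u v \<Longrightarrow> strong_eq G Oc v w \<Longrightarrow> strong_eq G Oc u w"
| ctxt: "strong_eq G Oc u v \<Longrightarrow> strong_eq G Oc (p @ u @ q) (p @ v @ q)"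

text \<open>alpha : S(G,Oc) -> G on a word x_{h_1}...x_{h_m}, given by the list [h_1,...,h_m].\<close>
definition alpha :: "('a, 'b) monoid_scheme \<Rightarrow> 'a list \<Rightarrow> 'a" where
  "alpha G hs = foldr (\<lambda>h acc. h \<otimes>\<^bsub>G\<^esub> acc) hs \<one>\<^bsub>G\<^esub>"

definition ywords :: "('a \<times> 'a) list \<Rightarrow> 'a gen list" where
  "ywords abps = map (\<lambda>(a, b). Yab a b) abps"

end

theory Submission imports Defs begin

lemma se_app: "strong_eq G Oc u v \<Longrightarrow> strong_eq G Oc u' v' \<Longrightarrow> strong_eq G Oc (u@u') (v@v')"
proof -
  assume a: "strong_eq G Oc u v" and b: "strong_eq G Oc u' v'"
  have 1: "strong_eq G Oc ([] @ u @ u') ([] @ v @ u')" by (rule strong_eq.ctxt[OF a])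
  have 2: "strong_eq G Oc (v @ u' @ []) (v @ v' @ [])" by (rule strong_eq.ctxt[OF b])
  from 1 2 show ?thesis by (auto intro: strong_eq.trans)
qed

lemma se_tr: "strong_eq G Oc u v \<Longrightarrow> strong_eq G Oc v' w \<Longrightarrow> v = v' \<Longrightarrow> strong_eq G Oc u w"
  by (auto intro: strong_eq.trans)
lemma se_tr2: "strong_eq G Oc u v \<Longrightarrow> strong_eq G Oc v' w \<Longrightarrow> v = v' \<Longrightarrow> u0 = u \<Longrightarrow> w0 = w \<Longrightarrow> strong_eq G Oc u0 w0"
  by (auto intro: strong_eq.trans)
lemma se_eq: "strong_eq G Oc u v \<Longrightarrow> u0 = u \<Longrightarrow> v0 = v \<Longrightarrow> strong_eq G Oc u0 v0"
  by auto

lemma se_l: "strong_eq G Oc u v \<Longrightarrow> strong_eq G Oc (p@u) (p@v)"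
  using strong_eq.ctxt[of G Oc u v p "[]"] by simp
lemma se_r: "strong_eq G Oc u v \<Longrightarrow> strong_eq G Oc (u@q) (v@q)"
  using strong_eq.ctxt[of G Oc u v "[]" q] by simp

lemma alpha_Nil[simp]: "alpha G [] = \<one>\<^bsub>G\<^esub>" by (simp add: alpha_def)
lemma alpha_Cons[simp]: "alpha G (w#ws) = w \<otimes>\<^bsub>G\<^esub> alpha G ws" by (simp add: alpha_def)

context group begin
lemma lc1: "x \<in> carrier G \<Longrightarrow> y \<in> carrier G \<Longrightarrow> x \<otimes> (inv x \<otimes> y) = y"
  by (simp add: m_assoc[symmetric])
lemma lc2: "x \<in> carrier G \<Longrightarrow> y \<in> carrier G \<Longrightarrow> inv x \<otimes> (x \<otimes> y) = y"
  by (simp add: m_assoc[symmetric])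
lemmas gs = m_assoc inv_mult_group lc1 lc2
lemma idM: "w \<in> carrier G \<Longrightarrow> a \<in> carrier G \<Longrightarrow> b \<in> carrier G \<Longrightarrow>
  gconj G (gconj G w (cc1 G w a b)) (gcomm G (w \<otimes> a) b) = gconj G w (inv b)"
  unfolding gconj_def cc1_def gcomm_def by (simp add: gs)
lemma idN: "g \<in> carrier G \<Longrightarrow> a \<in> carrier G \<Longrightarrow> b \<in> carrier G \<Longrightarrow>
  gconj G (gconj G g (inv a)) (gcomm G a (inv g \<otimes> b)) = gconj G g (cc2 G g a b)"
  unfolding gconj_def cc2_def gcomm_def by (simp add: gs)
lemma gconj_closed[simp]: "x \<in> carrier G \<Longrightarrow> y \<in> carrier G \<Longrightarrow> gconj G x y \<in> carrier G"
  by (simp add: gconj_def)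
lemma gcomm_closed[simp]: "x \<in> carrier G \<Longrightarrow> y \<in> carrier G \<Longrightarrow> gcomm G x y \<in> carrier G"
  by (simp add: gcomm_def)
lemma cc1_closed[simp]: "g \<in> carrier G \<Longrightarrow> x \<in> carrier G \<Longrightarrow> y \<in> carrier G \<Longrightarrow> cc1 G g x y \<in> carrier G"
  by (simp add: cc1_def)
lemma cc2_closed[simp]: "g \<in> carrier G \<Longrightarrow> x \<in> carrier G \<Longrightarrow> y \<in> carrier G \<Longrightarrow> cc2 G g x y \<in> carrier G"
  by (simp add: cc2_def)
lemma gconj_one[simp]: "x \<in> carrier G \<Longrightarrow> gconj G x \<one> = x"
  by (simp add: gconj_def)
lemma gconj_of_one[simp]: "y \<in> carrier G \<Longrightarrow> gconj G \<one> y = \<one>"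
  by (simp add: gconj_def)
lemma gconj_comp: "x \<in> carrier G \<Longrightarrow> y \<in> carrier G \<Longrightarrow> z \<in> carrier G \<Longrightarrow>
   gconj G (gconj G x y) z = gconj G x (y \<otimes> z)"
  by (simp add: gconj_def gs)
lemma gconj_mult: "x \<in> carrier G \<Longrightarrow> y \<in> carrier G \<Longrightarrow> z \<in> carrier G \<Longrightarrow>
   gconj G (x \<otimes> y) z = gconj G x z \<otimes> gconj G y z"
  by (simp add: gconj_def gs)
lemma alpha_closed[simp]: "set ws \<subseteq> carrier G \<Longrightarrow> alpha G ws \<in> carrier G"
  by (induction ws) auto
lemma alpha_map: "set ws \<subseteq> carrier G \<Longrightarrow> c \<in> carrier G \<Longrightarrow>
   alpha G (map (\<lambda>w. gconj G w c) ws) = gconj G (alpha G ws) c"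
  by (induction ws) (auto simp: gconj_mult)
end

locale eqp = group G for G :: "('a,'b) monoid_scheme" (structure) +
  fixes Oc :: "'a set"
  assumes OC: "Oc \<subseteq> carrier G" and cl: "g \<in> Oc \<Longrightarrow> h \<in> carrier G \<Longrightarrow> gconj G g h \<in> Oc"
begin

lemma inO[simp]: "g \<in> Oc \<Longrightarrow> g \<in> carrier G" using OC by auto
lemma setO: "set ws \<subseteq> Oc \<Longrightarrow> set ws \<subseteq> carrier G" using OC by auto

lemma E1: "e \<in> Oc \<Longrightarrow> set ws \<subseteq> Oc \<Longrightarrow>
  strong_eq G Oc ([Xg e] @ map Xg ws) (map Xg ws @ [Xg (gconj G e (alpha G ws))])"
proof (induction ws arbitrary: e)
  case Nil then show ?case by (simp add: strong_eq.refl)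
next
  case (Cons w ws)
  have w: "w \<in> Oc" "set ws \<subseteq> Oc" using Cons by auto
  have e': "gconj G e w \<in> Oc" using cl Cons w by auto
  have 1: "strong_eq G Oc ([Xg e, Xg w] @ map Xg ws) ([Xg w, Xg (gconj G e w)] @ map Xg ws)"
    by (rule se_r, rule strong_eq.base, rule strong_rel.r1) (use Cons w in auto)
  have 2: "strong_eq G Oc ([Xg w] @ ([Xg (gconj G e w)] @ map Xg ws))
     ([Xg w] @ (map Xg ws @ [Xg (gconj G (gconj G e w) (alpha G ws))]))"
    by (rule se_l, rule Cons.IH[OF e' w(2)])
  have 3: "gconj G (gconj G e w) (alpha G ws) = gconj G e (alpha G (w#ws))"
    using Cons w setO by (simp add: gconj_comp)
  have "strong_eq G Oc ([Xg e] @ map Xg (w#ws)) (map Xg (w#ws) @ [Xg (gconj G (gconj G e w) (alpha G ws))])"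
    by (rule se_tr2[OF 1 2]) simp_all
  then show ?case using 3 by simp
qed

lemma E2: "e \<in> Oc \<Longrightarrow> set ws \<subseteq> Oc \<Longrightarrow>
  strong_eq G Oc (map Xg ws @ [Xg e]) ([Xg e] @ map Xg (map (\<lambda>w. gconj G w e) ws))"
proof (induction ws)
  case Nil then show ?case by (simp add: strong_eq.refl)
next
  case (Cons w ws)
  have 1: "strong_eq G Oc ([Xg w] @ (map Xg ws @ [Xg e])) ([Xg w] @ ([Xg e] @ map Xg (map (\<lambda>w. gconj G w e) ws)))"
    by (rule se_l, rule Cons.IH) (use Cons in auto)
  have 2: "strong_eq G Oc ([Xg w, Xg e] @ map Xg (map (\<lambda>w. gconj G w e) ws)) ([Xg e, Xg (gconj G w e)] @ map Xg (map (\<lambda>w. gconj G w e) ws))"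
    by (rule se_r, rule strong_eq.base, rule strong_rel.r1) (use Cons in auto)
  show ?case by (rule se_tr2[OF 1 2]) simp_all
qed

lemma Comm: "set B \<subseteq> Oc \<Longrightarrow> set ws \<subseteq> Oc \<Longrightarrow> alpha G ws = \<one> \<Longrightarrow>
  strong_eq G Oc (map Xg B @ map Xg ws) (map Xg ws @ map Xg B)"
proof (induction B)
  case Nil then show ?case by (simp add: strong_eq.refl)
next
  case (Cons b B)
  have 1: "strong_eq G Oc ([Xg b] @ (map Xg B @ map Xg ws)) ([Xg b] @ (map Xg ws @ map Xg B))"
    by (rule se_l, rule Cons.IH) (use Cons in auto)
  have 2: "strong_eq G Oc (([Xg b] @ map Xg ws) @ map Xg B) ((map Xg ws @ [Xg b]) @ map Xg B)"
    by (rule se_r) (use E1[of b ws] Cons in auto)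
  show ?case by (rule se_tr2[OF 1 2]) simp_all
qed

lemma L: "e \<in> Oc \<Longrightarrow> a \<in> carrier G \<Longrightarrow> b \<in> carrier G \<Longrightarrow>
  strong_eq G Oc [Yab a b, Xg e] [Xg e, Yab (gconj G a e) (gconj G b e)]"
proof -
  assume e: "e \<in> Oc" and ab: "a \<in> carrier G" "b \<in> carrier G"
  define C where "C = gcomm G a b"
  have C: "C \<in> carrier G" using ab by (simp add: C_def)
  define g where "g = gconj G e (inv C)"
  have g: "g \<in> Oc" using cl e C by (simp add: g_def)
  have ge: "gconj G g C = e" using e C by (simp add: g_def gconj_comp)
  have 1: "strong_eq G Oc [Xg g, Yab a b] [Yab a b, Xg e]"
    using strong_rel.r2[OF g ab] ge by (simp add: C_def strong_eq.base)
  have 2: "strong_eq G Oc [Xg g, Yab a b] [Xg e, Yab (gconj G a e) (gconj G b e)]"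
    using strong_rel.r5[OF g ab] ge by (simp add: C_def strong_eq.base)
  show ?thesis using strong_eq.trans[OF strong_eq.sym[OF 1] 2] .
qed

lemma Lstar: "set ws \<subseteq> Oc \<Longrightarrow> a \<in> carrier G \<Longrightarrow> b \<in> carrier G \<Longrightarrow>
  strong_eq G Oc ([Yab a b] @ map Xg ws) (map Xg ws @ [Yab (gconj G a (alpha G ws)) (gconj G b (alpha G ws))])"
proof (induction ws arbitrary: a b)
  case Nil then show ?case by (simp add: strong_eq.refl)
next
  case (Cons w ws)
  have w: "w \<in> Oc" "set ws \<subseteq> Oc" using Cons by auto
  have 1: "strong_eq G Oc ([Yab a b, Xg w] @ map Xg ws) ([Xg w, Yab (gconj G a w) (gconj G b w)] @ map Xg ws)"
    by (rule se_r, rule L) (use Cons w in auto)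
  have 2: "strong_eq G Oc ([Xg w] @ ([Yab (gconj G a w) (gconj G b w)] @ map Xg ws))
     ([Xg w] @ (map Xg ws @ [Yab (gconj G (gconj G a w) (alpha G ws)) (gconj G (gconj G b w) (alpha G ws))]))"
    by (rule se_l, rule Cons.IH) (use Cons w in auto)
  show ?case by (rule se_tr2[OF 1 2]) (use Cons w setO in \<open>simp_all add: gconj_comp\<close>)
qed

lemma CommY: "set ws \<subseteq> Oc \<Longrightarrow> alpha G ws = \<one> \<Longrightarrow> \<forall>(a, b) \<in> set U. a \<in> carrier G \<and> b \<in> carrier G \<Longrightarrow>
  strong_eq G Oc (ywords U @ map Xg ws) (map Xg ws @ ywords U)"
proof (induction U)
  case Nil then show ?case by (simp add: strong_eq.refl ywords_def)
next
  case (Cons ab U)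
  obtain a b where ab: "ab = (a,b)" by fastforce
  have c: "a \<in> carrier G" "b \<in> carrier G" using Cons ab by auto
  have 1: "strong_eq G Oc ([Yab a b] @ (ywords U @ map Xg ws)) ([Yab a b] @ (map Xg ws @ ywords U))"
    by (rule se_l, rule Cons.IH) (use Cons in auto)
  have 2: "strong_eq G Oc (([Yab a b] @ map Xg ws) @ ywords U) ((map Xg ws @ [Yab a b]) @ ywords U)"
    by (rule se_r) (use Lstar[of ws a b] Cons c in auto)
  show ?case by (rule se_tr2[OF 1 2]) (simp_all add: ab ywords_def)
qed

lemma N: "g \<in> Oc \<Longrightarrow> a \<in> carrier G \<Longrightarrow> b \<in> carrier G \<Longrightarrow>
  strong_eq G Oc [Yab a b, Xg g] [Xg (gconj G g (inv a)), Yab a (inv g \<otimes> b)]"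
proof -
  assume g: "g \<in> Oc" and ab: "a \<in> carrier G" "b \<in> carrier G"
  have g2: "gconj G g (inv a) \<in> Oc" using cl g ab by simp
  have b2: "inv g \<otimes> b \<in> carrier G" using g ab by simp
  have 1: "strong_eq G Oc [Yab a b, Xg g] [Yab a (inv g \<otimes> b), Xg (gconj G g (cc2 G g a b))]"
    by (rule strong_eq.base, rule strong_rel.r4) (use g ab in auto)
  have 2: "strong_eq G Oc [Xg (gconj G g (inv a)), Yab a (inv g \<otimes> b)] [Yab a (inv g \<otimes> b), Xg (gconj G (gconj G g (inv a)) (gcomm G a (inv g \<otimes> b)))]"
    by (rule strong_eq.base, rule strong_rel.r2) (use g2 ab b2 in auto)
  show ?thesis by (rule se_tr2[OF 1 strong_eq.sym[OF 2]]) (use idN g ab in simp_all)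
qed

lemma Npass: "set ws \<subseteq> Oc \<Longrightarrow> a \<in> carrier G \<Longrightarrow> b \<in> carrier G \<Longrightarrow>
  strong_eq G Oc ([Yab a b] @ map Xg ws) (map Xg (map (\<lambda>w. gconj G w (inv a)) ws) @ [Yab a (inv (alpha G ws) \<otimes> b)])"
proof (induction ws arbitrary: b)
  case Nil then show ?case by (simp add: strong_eq.refl)
next
  case (Cons w ws)
  have w: "w \<in> Oc" "set ws \<subseteq> Oc" using Cons by auto
  have 1: "strong_eq G Oc ([Yab a b, Xg w] @ map Xg ws) ([Xg (gconj G w (inv a)), Yab a (inv w \<otimes> b)] @ map Xg ws)"
    by (rule se_r, rule N) (use Cons w in auto)
  have 2: "strong_eq G Oc ([Xg (gconj G w (inv a))] @ ([Yab a (inv w \<otimes> b)] @ map Xg ws))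
     ([Xg (gconj G w (inv a))] @ (map Xg (map (\<lambda>w. gconj G w (inv a)) ws) @ [Yab a (inv (alpha G ws) \<otimes> (inv w \<otimes> b))]))"
    by (rule se_l, rule Cons.IH) (use Cons w in auto)
  show ?case by (rule se_tr2[OF 1 2]) (use Cons w setO in \<open>simp_all add: gs\<close>)
qed

lemma M: "w \<in> Oc \<Longrightarrow> a \<in> carrier G \<Longrightarrow> b \<in> carrier G \<Longrightarrow>
  strong_eq G Oc [Xg w, Yab a b] [Yab (w \<otimes> a) b, Xg (gconj G w (inv b))]"
proof -
  assume w: "w \<in> Oc" and ab: "a \<in> carrier G" "b \<in> carrier G"
  have w1: "gconj G w (cc1 G w a b) \<in> Oc" using cl w ab by simp
  have a2: "w \<otimes> a \<in> carrier G" using w ab by simp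
  have 1: "strong_eq G Oc [Xg w, Yab a b] [Xg (gconj G w (cc1 G w a b)), Yab (w \<otimes> a) b]"
    by (rule strong_eq.base, rule strong_rel.r3) (use w ab in auto)
  have 2: "strong_eq G Oc [Xg (gconj G w (cc1 G w a b)), Yab (w \<otimes> a) b] [Yab (w \<otimes> a) b, Xg (gconj G (gconj G w (cc1 G w a b)) (gcomm G (w \<otimes> a) b))]"
    by (rule strong_eq.base, rule strong_rel.r2) (use w1 ab a2 in auto)
  show ?thesis by (rule se_tr2[OF 1 2]) (use idM w ab in simp_all)
qed

lemma Mpass: "set ws \<subseteq> Oc \<Longrightarrow> a \<in> carrier G \<Longrightarrow> b \<in> carrier G \<Longrightarrow>
  strong_eq G Oc (map Xg ws @ [Yab a b]) ([Yab (alpha G ws \<otimes> a) b] @ map Xg (map (\<lambda>w. gconj G w (inv b)) ws))"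
proof (induction ws arbitrary: a)
  case Nil then show ?case by (simp add: strong_eq.refl)
next
  case (Cons w ws)
  have w: "w \<in> Oc" "set ws \<subseteq> Oc" using Cons by auto
  have aa: "alpha G ws \<otimes> a \<in> carrier G" using Cons w setO by auto
  have 1: "strong_eq G Oc ([Xg w] @ (map Xg ws @ [Yab a b])) ([Xg w] @ ([Yab (alpha G ws \<otimes> a) b] @ map Xg (map (\<lambda>w. gconj G w (inv b)) ws)))"
    by (rule se_l, rule Cons.IH) (use Cons w in auto)
  have 2: "strong_eq G Oc ([Xg w, Yab (alpha G ws \<otimes> a) b] @ map Xg (map (\<lambda>w. gconj G w (inv b)) ws))
     ([Yab (w \<otimes> (alpha G ws \<otimes> a)) b, Xg (gconj G w (inv b))] @ map Xg (map (\<lambda>w. gconj G w (inv b)) ws))"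
    by (rule se_r, rule M) (use Cons w aa in auto)
  show ?case by (rule se_tr2[OF 1 2]) (use Cons w setO in \<open>simp_all add: gs\<close>)
qed

lemma gconj_inj: "x \<in> carrier G \<Longrightarrow> y \<in> carrier G \<Longrightarrow> c \<in> carrier G \<Longrightarrow> gconj G x c = gconj G y c \<Longrightarrow> x = y"
proof -
  assume a: "x \<in> carrier G" "y \<in> carrier G" "c \<in> carrier G" "gconj G x c = gconj G y c"
  have "gconj G (gconj G x c) (inv c) = gconj G (gconj G y c) (inv c)" using a(4) by simp
  then show ?thesis using a(1-3) by (simp add: gconj_comp)
qed

lemma fin_inv:
  assumes fin: "finite Oc" and RO: "\<And>f. R f \<Longrightarrow> f \<in> Oc" and k: "k \<in> carrier G"
    and cls: "\<And>f. R f \<Longrightarrow> R (gconj G f k)" and Rf: "R f"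
  shows "R (gconj G f (inv k))"
proof -
  have f: "f \<in> carrier G" using RO[OF Rf] by simp
  define s where "s n = gconj G f (k [^] (n::nat))" for n
  have Rs: "R (s n)" for n
  proof (induction n)
    case 0 then show ?case using Rf f by (simp add: s_def)
  next
    case (Suc n)
    have "s (Suc n) = gconj G (s n) k" using f k by (simp add: s_def gconj_comp)
    then show ?case using cls[OF Suc] by simp
  qed
  have "\<not> inj s"
  proof
    assume "inj s"
    have "range s \<subseteq> Oc" using RO Rs by auto
    then have "finite (range s)" by (rule finite_subset) (rule fin)
    from finite_imageD[OF this \<open>inj s\<close>] show False by simp
  qed
  then obtain i j where ij: "i \<noteq> j" "s i = s j" unfolding inj_def by blast
  obtain i j where ij: "i < j" "s i = s j"
  proof (cases "i < j")
    case True then show ?thesis using that ij by blast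
  next
    case False then have "j < i" using ij(1) by simp
    then show ?thesis using that ij(2) by metis
  qed
  define d where "d = j - i"
  have d: "d > 0" "j = d + i" using ij by (auto simp: d_def)
  have "k [^] j = k [^] d \<otimes> k [^] i" using d k by (simp add: nat_pow_mult)
  then have hh: "gconj G (gconj G f (k [^] d)) (k [^] i) = gconj G f (k [^] i)"
    using ij f k by (simp add: s_def gconj_comp)
  have fd: "gconj G f (k [^] d) = f"
    by (rule gconj_inj[OF _ _ _ hh]) (use f k in simp_all)
  obtain e where e: "d = Suc e" using d by (cases d) auto
  have ke: "k [^] d \<otimes> inv k = k [^] e" using k e by (simp add: m_assoc)
  have "gconj G f (inv k) = gconj G (gconj G f (k [^] d)) (inv k)" using fd by simp
  also have "\<dots> = gconj G f (k [^] d \<otimes> inv k)" by (rule gconj_comp) (use f k in simp_all)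
  also have "\<dots> = s e" using ke by (simp add: s_def)
  finally show ?thesis using Rs by simp
qed

lemma gen_closed:
  assumes S: "S \<subseteq> carrier G" and RO: "\<And>f. R f \<Longrightarrow> f \<in> Oc" and fin: "finite Oc"
    and cls: "\<And>k f. k \<in> S \<Longrightarrow> R f \<Longrightarrow> R (gconj G f k)"
    and h: "h \<in> generate G S"
  shows "R f \<Longrightarrow> R (gconj G f h)"
  using h
proof (induction h arbitrary: f rule: generate.induct)
  case one then show ?case using RO by simp
next
  case (incl h) then show ?case using cls by blast
next
  case (inv h)
  show ?case by (rule fin_inv[OF fin RO]) (use inv S cls in auto)
next
  case (eng h1 h2)
  have c: "h1 \<in> carrier G" "h2 \<in> carrier G" using eng.hyps generate_incl[OF S] by auto
  have "R (gconj G (gconj G f h1) h2)" using eng by blast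
  then show ?case using c RO[OF eng.prems] by (simp add: gconj_comp)
qed

lemma lift:
  assumes c: "c \<in> carrier G"
    and T: "\<And>ws. set ws \<subseteq> Oc \<Longrightarrow> alpha G ws = \<one> \<Longrightarrow>
       strong_eq G Oc (P @ map Xg ws @ Y) (P @ map Xg (map (\<lambda>w. gconj G w c) ws) @ Y)"
    and R: "f \<in> Oc \<and> (\<exists>zs. set zs \<subseteq> Oc \<and> alpha G (f#zs) = \<one> \<and> strong_eq G Oc S0 (P @ map Xg (f#zs) @ Y))"
  shows "gconj G f c \<in> Oc \<and> (\<exists>zs. set zs \<subseteq> Oc \<and> alpha G (gconj G f c#zs) = \<one> \<and> strong_eq G Oc S0 (P @ map Xg (gconj G f c#zs) @ Y))"
proof -
  obtain zs where z: "f \<in> Oc" "set zs \<subseteq> Oc" "alpha G (f#zs) = \<one>" "strong_eq G Oc S0 (P @ map Xg (f#zs) @ Y)"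
    using R by blast
  have s: "set (f#zs) \<subseteq> Oc" using z by auto
  have 1: "strong_eq G Oc S0 (P @ map Xg (map (\<lambda>w. gconj G w c) (f#zs)) @ Y)"
    using strong_eq.trans[OF z(4) T[OF s z(3)]] .
  have 2: "alpha G (map (\<lambda>w. gconj G w c) (f#zs)) = \<one>"
    using alpha_map[OF setO[OF s] c] z(3) c by simp
  have 3: "set (map (\<lambda>w. gconj G w c) zs) \<subseteq> Oc" using z cl c by auto
  show ?thesis using 1 2 3 cl[OF z(1) c] by (intro conjI exI[of _ "map (\<lambda>w. gconj G w c) zs"]) auto
qed

lemma Tk: "k \<in> Oc \<Longrightarrow> set ws \<subseteq> Oc \<Longrightarrow> alpha G ws = \<one> \<Longrightarrow>
  strong_eq G Oc ([Xg k] @ map Xg ws) ([Xg k] @ map Xg (map (\<lambda>w. gconj G w k) ws))"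
proof -
  assume a: "k \<in> Oc" "set ws \<subseteq> Oc" "alpha G ws = \<one>"
  show ?thesis by (rule se_tr2[OF E1[OF a(1,2)] E2[OF a(1,2)]]) (use a in simp_all)
qed

lemma Tgs:
  assumes "set gs \<subseteq> Oc" "k \<in> set gs" "set ws \<subseteq> Oc" "alpha G ws = \<one>"
  shows "strong_eq G Oc (map Xg gs @ map Xg ws @ Y) (map Xg gs @ map Xg (map (\<lambda>w. gconj G w k) ws) @ Y)"
proof -
  obtain A B where gs: "gs = A @ k # B" using assms(2) split_list by metis
  have k: "k \<in> Oc" "set B \<subseteq> Oc" using assms gs by auto
  define ws' where "ws' = map (\<lambda>w. gconj G w k) ws"
  have ws': "set ws' \<subseteq> Oc" "alpha G ws' = \<one>"
    using assms cl k alpha_map[OF setO[OF assms(3)], of k] by (auto simp: ws'_def)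
  have 1: "strong_eq G Oc (map Xg A @ [Xg k] @ (map Xg B @ map Xg ws) @ Y) (map Xg A @ [Xg k] @ (map Xg ws @ map Xg B) @ Y)"
    using strong_eq.ctxt[OF Comm[OF k(2) assms(3,4)], of "map Xg A @ [Xg k]" Y] by simp
  have 2: "strong_eq G Oc (map Xg A @ ([Xg k] @ map Xg ws) @ map Xg B @ Y) (map Xg A @ ([Xg k] @ map Xg ws') @ map Xg B @ Y)"
    by (rule strong_eq.ctxt) (use Tk[OF k(1) assms(3,4)] in \<open>simp add: ws'_def\<close>)
  have 3: "strong_eq G Oc (map Xg A @ [Xg k] @ (map Xg ws' @ map Xg B) @ Y) (map Xg A @ [Xg k] @ (map Xg B @ map Xg ws') @ Y)"
    using strong_eq.ctxt[OF strong_eq.sym[OF Comm[OF k(2) ws']], of "map Xg A @ [Xg k]" Y] by simp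
  have "strong_eq G Oc (map Xg A @ [Xg k] @ (map Xg B @ map Xg ws) @ Y) (map Xg A @ [Xg k] @ (map Xg B @ map Xg ws') @ Y)"
    by (rule se_tr2[OF se_tr2[OF 1 2] 3]) simp_all
  then show ?thesis by (simp add: gs ws'_def)
qed

lemma Ty:
  assumes ab: "\<forall>(a, b) \<in> set abps. a \<in> carrier G \<and> b \<in> carrier G" "(a,b) \<in> set abps"
    and ws: "set ws \<subseteq> Oc" "alpha G ws = \<one>" "set ws' \<subseteq> Oc" "alpha G ws' = \<one>"
    and loc: "strong_eq G Oc (map Xg ws @ [Yab a b]) (map Xg ws' @ [Yab a b])"
  shows "strong_eq G Oc (P @ map Xg ws @ ywords abps) (P @ map Xg ws' @ ywords abps)"
proof -
  obtain U V where abps: "abps = U @ (a,b) # V" using ab(2) split_list by metis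
  have U: "\<forall>(a, b) \<in> set U. a \<in> carrier G \<and> b \<in> carrier G" using ab abps by auto
  have yw: "ywords abps = ywords U @ [Yab a b] @ ywords V" by (simp add: abps ywords_def)
  have 1: "strong_eq G Oc (P @ (map Xg ws @ ywords U) @ [Yab a b] @ ywords V) (P @ (ywords U @ map Xg ws) @ [Yab a b] @ ywords V)"
    by (rule strong_eq.ctxt, rule strong_eq.sym, rule CommY[OF ws(1,2) U])
  have 2: "strong_eq G Oc ((P @ ywords U) @ (map Xg ws @ [Yab a b]) @ ywords V) ((P @ ywords U) @ (map Xg ws' @ [Yab a b]) @ ywords V)"
    by (rule strong_eq.ctxt, rule loc)
  have 3: "strong_eq G Oc (P @ (ywords U @ map Xg ws') @ [Yab a b] @ ywords V) (P @ (map Xg ws' @ ywords U) @ [Yab a b] @ ywords V)"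
    by (rule strong_eq.ctxt, rule CommY[OF ws(3,4) U])
  show ?thesis unfolding yw by (rule se_tr2[OF se_tr2[OF 1 2] 3]) simp_all
qed

lemma Ta: "a \<in> carrier G \<Longrightarrow> b \<in> carrier G \<Longrightarrow> set ws \<subseteq> Oc \<Longrightarrow> alpha G ws = \<one> \<Longrightarrow>
  strong_eq G Oc (map Xg ws @ [Yab a b]) (map Xg (map (\<lambda>w. gconj G w (inv a)) ws) @ [Yab a b])"
proof -
  assume a: "a \<in> carrier G" "b \<in> carrier G" "set ws \<subseteq> Oc" "alpha G ws = \<one>"
  show ?thesis by (rule se_tr2[OF strong_eq.sym[OF Lstar[OF a(3,1,2)]] Npass[OF a(3,1,2)]]) (use a in simp_all)
qed

lemma Tb: "a \<in> carrier G \<Longrightarrow> b \<in> carrier G \<Longrightarrow> set ws \<subseteq> Oc \<Longrightarrow> alpha G ws = \<one> \<Longrightarrow>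
  strong_eq G Oc (map Xg ws @ [Yab a b]) (map Xg (map (\<lambda>w. gconj G w (inv b)) ws) @ [Yab a b])"
proof -
  assume a: "a \<in> carrier G" "b \<in> carrier G" "set ws \<subseteq> Oc" "alpha G ws = \<one>"
  define ws' where "ws' = map (\<lambda>w. gconj G w (inv b)) ws"
  have ws': "set ws' \<subseteq> Oc" "alpha G ws' = \<one>"
    using a cl alpha_map[OF setO[OF a(3)], of "inv b"] by (auto simp: ws'_def)
  have 1: "strong_eq G Oc (map Xg ws @ [Yab a b]) ([Yab a b] @ map Xg ws')"
    using Mpass[OF a(3,1,2)] a by (simp add: ws'_def)
  have 2: "strong_eq G Oc ([Yab a b] @ map Xg ws') (map Xg ws' @ [Yab a b])"
    using Lstar[OF ws'(1) a(1,2)] ws' a by simp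
  show ?thesis using strong_eq.trans[OF 1 2] by (simp add: ws'_def)
qed

end

theorem proposition4:
  fixes G :: "('a, 'b) monoid_scheme" and Oc :: "'a set"
    and gs :: "'a list" and abps :: "('a \<times> 'a) list" and g h :: 'a and ss :: "'a list"
  assumes "equipped G Oc" and "finite Oc"
    and "set gs \<subseteq> Oc"
    and "\<forall>(a, b) \<in> set abps. a \<in> carrier G \<and> b \<in> carrier G"
    and "g \<in> Oc"
    and "h \<in> generate G (set gs \<union> fst ` set abps \<union> snd ` set abps)"
    and "ss \<noteq> []" and "set ss \<subseteq> Oc" and "alpha G ss = inv\<^bsub>G\<^esub> g"
  shows "\<exists>zs. zs \<noteq> [] \<and> set zs \<subseteq> Oc \<and>
    strong_eq G Oc (map Xg gs @ [Xg g] @ map Xg ss @ ywords abps)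
                  (map Xg gs @ [Xg (gconj G g h)] @ map Xg zs @ ywords abps)"
proof -
  have grp: "group G" and OC: "Oc \<subseteq> carrier G" and one: "\<one>\<^bsub>G\<^esub> \<notin> Oc"
    and clo: "\<And>g h. g \<in> Oc \<Longrightarrow> h \<in> carrier G \<Longrightarrow> gconj G g h \<in> Oc"
    using assms(1) by (auto simp: equipped_def)
  interpret E: eqp G Oc by (intro eqp.intro eqp_axioms.intro grp) (use OC clo in auto)
  define START where "START = map Xg gs @ [Xg g] @ map Xg ss @ ywords abps"
  define R where "R f \<longleftrightarrow> f \<in> Oc \<and> (\<exists>zs. set zs \<subseteq> Oc \<and> alpha G (f#zs) = \<one>\<^bsub>G\<^esub> \<and>
       strong_eq G Oc START (map Xg gs @ map Xg (f#zs) @ ywords abps))" for f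
  have RO: "\<And>f. R f \<Longrightarrow> f \<in> Oc" by (simp add: R_def)
  have Rg: "R g" unfolding R_def
    using assms(5,8,9) OC by (intro conjI exI[of _ ss]) (auto simp: START_def strong_eq.refl)
  have S: "set gs \<union> fst ` set abps \<union> snd ` set abps \<subseteq> carrier G"
    using assms(3,4) OC by fastforce
  have cls: "R (gconj G f k)" if k: "k \<in> set gs \<union> fst ` set abps \<union> snd ` set abps" and Rf: "R f" for k f
  proof -
    consider "k \<in> set gs" | b where "(k,b) \<in> set abps" | a where "(a,k) \<in> set abps"
      using k by force
    then show ?thesis
    proof cases
      case 1
      then show ?thesis using Rf unfolding R_def
        by (intro E.lift[where P="map Xg gs"]) (use 1 assms(3) OC E.Tgs in auto)
    next
      case 2
      have kb: "k \<in> carrier G" "b \<in> carrier G" using 2 assms(4) by auto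
      have ci: "R (gconj G f' (inv\<^bsub>G\<^esub> k))" if "R f'" for f'
        using that unfolding R_def
      proof (intro E.lift[where P="map Xg gs"])
        fix ws assume ws: "set ws \<subseteq> Oc" "alpha G ws = \<one>\<^bsub>G\<^esub>"
        have ws': "set (map (\<lambda>w. gconj G w (inv\<^bsub>G\<^esub> k)) ws) \<subseteq> Oc"
          "alpha G (map (\<lambda>w. gconj G w (inv\<^bsub>G\<^esub> k)) ws) = \<one>\<^bsub>G\<^esub>"
          using ws clo kb E.alpha_map[OF E.setO[OF ws(1)], of "inv\<^bsub>G\<^esub> k"] by auto
        show "strong_eq G Oc (map Xg gs @ map Xg ws @ ywords abps)
            (map Xg gs @ map Xg (map (\<lambda>w. gconj G w (inv\<^bsub>G\<^esub> k)) ws) @ ywords abps)"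
          by (rule E.Ty[OF assms(4) 2 ws ws'], rule E.Ta[OF kb ws])
      qed (use kb in auto)
      have "R (gconj G f (inv\<^bsub>G\<^esub> (inv\<^bsub>G\<^esub> k)))"
        by (rule E.fin_inv[OF assms(2) RO E.inv_closed[OF kb(1)] ci Rf])
      then show ?thesis using kb by simp
    next
      case 3
      have kb: "k \<in> carrier G" "a \<in> carrier G" using 3 assms(4) by auto
      have ci: "R (gconj G f' (inv\<^bsub>G\<^esub> k))" if "R f'" for f'
        using that unfolding R_def
      proof (intro E.lift[where P="map Xg gs"])
        fix ws assume ws: "set ws \<subseteq> Oc" "alpha G ws = \<one>\<^bsub>G\<^esub>"
        have ws': "set (map (\<lambda>w. gconj G w (inv\<^bsub>G\<^esub> k)) ws) \<subseteq> Oc"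
          "alpha G (map (\<lambda>w. gconj G w (inv\<^bsub>G\<^esub> k)) ws) = \<one>\<^bsub>G\<^esub>"
          using ws clo kb E.alpha_map[OF E.setO[OF ws(1)], of "inv\<^bsub>G\<^esub> k"] by auto
        show "strong_eq G Oc (map Xg gs @ map Xg ws @ ywords abps)
            (map Xg gs @ map Xg (map (\<lambda>w. gconj G w (inv\<^bsub>G\<^esub> k)) ws) @ ywords abps)"
          by (rule E.Ty[OF assms(4) 3 ws ws'], rule E.Tb[OF kb(2,1) ws])
      qed (use kb in auto)
      have "R (gconj G f (inv\<^bsub>G\<^esub> (inv\<^bsub>G\<^esub> k)))"
        by (rule E.fin_inv[OF assms(2) RO E.inv_closed[OF kb(1)] ci Rf])
      then show ?thesis using kb by simp
    qed
  qed
  have "R (gconj G g h)"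
    by (rule E.gen_closed[OF S RO assms(2) cls assms(6) Rg])
  then obtain zs where z: "gconj G g h \<in> Oc" "set zs \<subseteq> Oc" "alpha G (gconj G g h # zs) = \<one>\<^bsub>G\<^esub>"
    "strong_eq G Oc START (map Xg gs @ map Xg (gconj G g h # zs) @ ywords abps)"
    unfolding R_def by blast
  have "zs \<noteq> []"
  proof
    assume "zs = []"
    then have "gconj G g h = \<one>\<^bsub>G\<^esub>" using z(3) z(1) OC by auto
    then show False using z(1) one by simp
  qed
  then show ?thesis using z(2,4) unfolding START_def by auto
qed

end
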